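(* Let $\lambda_1,\lambda_2\in\mathbb{N}$. For all $(k,l,m)$ with $0\le m\le\lambda_1$, $0\le l\le\lambda_2$, $0\le k\le\lambda_2+m-l$, writing $v_{k,l,m}=F_2^k\hat F_3^lF_1^mv_\lambda\in V_\lambda$ (this notation is used for all $k,l,m\in\mathbb{N}$; such vectors may be zero), we have: (i) $K_1v_{k,l,m}=q^{\lambda_1+k-l-2m}v_{k,l,m}$; (ii) $K_2v_{k,l,m}=q^{\lambda_2-2k-l+m}v_{k,l,m}$; (iii) $F_1v_{k,l,m}=a_k(l,m)v_{k,l,m+1}+b_k(l,m)v_{k-1,l+1,m}$; (iv) $E_1v_{k,l,m}=\alpha_k(l,m)v_{k,l,m-1}+\beta_k(l,m)v_{k+1,l-1,m}$; (v) $F_2v_{k,l,m}=v_{k+1,l,m}$; (vi) $E_2v_{k,l,m}=\eta_k(l,m)v_{k-1,l,m}$; where (terms with a zero coefficient are omitted, so negative indices never matter) $a_k(l,m)=\frac{q^{\lambda_2+m+1-k-l}-q^{-\lambda_2-m-1+k+l}}{q^{\lambda_2+m+1-l}-q^{-\lambda_2-m-1+l}}$, $b_k(l,m)=\frac{q^k-q^{-k}}{q^{\lambda_2+m+1-l}-q^{-\lambda_2-m-1+l}}$, $\eta_k(l,m)=\frac{q^k-q^{-k}}{q-q^{-1}}\cdot\frac{q^{1-k+\lambda_2-l+m}-q^{k-1-\lambda_2+l-m}}{q-q^{-1}}$, $\alpha_k(l,m)=\frac{(q^m-q^{-m})(q^{\lambda_1-m+1}-q^{-\lambda_1+m-1})(q^{\lambda_2+m+1}-q^{-\lambda_2-m-1})}{(q-q^{-1})^2(q^{\lambda_2+m-l+1}-q^{-\lambda_2-m+l-1})}$,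 $\beta_k(l,m)=\frac{(q^l-q^{-l})(q^{\lambda_2-l+1}-q^{-\lambda_2+l-1})(q^{\lambda_1+\lambda_2-l+2}-q^{-\lambda_1-\lambda_2+l-2})}{(q-q^{-1})^2(q^{\lambda_2+m-l+1}-q^{-\lambda_2-m+l-1})}$.
   Context: Fix $0<q<1$. $\mathcal{U}_q(\mathfrak{su}(3))$ denotes the unital associative $\mathbb{C}$-algebra generated by $E_i,F_i,K_i^{\pm1}$ ($i=1,2$) subject to: the $K_i^{\pm1}$ pairwise commute, $K_iK_i^{-1}=K_i^{-1}K_i=1$, $K_iE_j=q^{a_{ij}}E_jK_i$, $K_iF_j=q^{-a_{ij}}F_jK_i$, $E_iF_j-F_jE_i=\delta_{ij}\frac{K_i-K_i^{-1}}{q-q^{-1}}$, where $a_{11}=a_{22}=2$, $a_{12}=a_{21}=-1$, and for $i\neq j$ the quantum Serre relations $E_i^2E_j-(q+q^{-1})E_iE_jE_i+E_jE_i^2=0=F_i^2F_j-(q+q^{-1})F_iF_jF_i+F_jF_i^2$. Define $\hat F_3=F_1F_2\frac{qK_2-q^{-1}K_2^{-1}}{q-q^{-1}}-F_2F_1\frac{K_2-K_2^{-1}}{q-q^{-1}}$. For $\lambda_1,\lambda_2\in\mathbb{N}=\{0,1,2,\dots\}$, $V_\lambda$ denotes the finite-dimensional irreducible representation of $\mathcal{U}_q(\mathfrak{su}(3))$ generated by a highest weight vector $v_\lambda$ with $E_iv_\lambda=0$, $K_iv_\lambda=q^{\lambda_i}v_\lambda$ ($i=1,2$). The vectors $F_2^k\hat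 F_3^lF_1^mv_\lambda$ with $0\le m\le\lambda_1$, $0\le l\le\lambda_2$, $0\le k\le\lambda_2+m-l$ form a basis of $V_\lambda$. *)

theory Defs
  imports Complex_Main
begin

text \<open>The generators are
  indexed by i in {1,2}: E i, F i, K i and Ki i (= K_i^{-1}).\<close>

definition cartan :: "nat \<Rightarrow> nat \<Rightarrow> int" where
  "cartan i j = (if i = j then 2 else -1)"

definition Uq_su3_rep ::
  "real \<Rightarrow> (complex \<Rightarrow> 'v::ab_group_add \<Rightarrow> 'v) \<Rightarrow> (nat \<Rightarrow> 'v \<Rightarrow> 'v) \<Rightarrow> (nat \<Rightarrow> 'v \<Rightarrow> 'v)
     \<Rightarrow> (nat \<Rightarrow> 'v \<Rightarrow> 'v) \<Rightarrow> (nat \<Rightarrow> 'v \<Rightarrow> 'v) \<Rightarrow> bool" where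
  "Uq_su3_rep q sc E F K Ki \<longleftrightarrow>
     vector_space sc \<and>
     (\<forall>i\<in>{1,2}. Vector_Spaces.linear sc sc (E i) \<and> Vector_Spaces.linear sc sc (F i) \<and>
                 Vector_Spaces.linear sc sc (K i) \<and> Vector_Spaces.linear sc sc (Ki i)) \<and>
     (\<forall>i\<in>{1,2}. \<forall>j\<in>{1,2}. \<forall>x.
        K i (K j x) = K j (K i x) \<and> K i (Ki j x) = Ki j (K i x) \<and> Ki i (Ki j x) = Ki j (Ki i x) \<and>
        K i (Ki i x) = x \<and> Ki i (K i x) = x \<and>
        K i (E j x) = sc (complex_of_real q powi cartan i j) (E j (K i x)) \<and>
        K i (F j x) = sc (complex_of_real q powi (- cartan i j)) (F j (K i x)) \<and>
        E i (F j x) - F j (E i x) =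
          (if i = j then sc (1 / complex_of_real (q - inverse q)) (K i x - Ki i x) else 0) \<and>
        (i \<noteq> j \<longrightarrow>
           E i (E i (E j x)) - sc (complex_of_real (q + inverse q)) (E i (E j (E i x)))
             + E j (E i (E i x)) = 0 \<and>
           F i (F i (F j x)) - sc (complex_of_real (q + inverse q)) (F i (F j (F i x)))
             + F j (F i (F i x)) = 0))"

definition fin_dim :: "(complex \<Rightarrow> 'v::ab_group_add \<Rightarrow> 'v) \<Rightarrow> bool" where
  "fin_dim sc \<longleftrightarrow> (\<exists>B. finite B \<and> module.span sc B = UNIV)"

definition irreducible_rep ::
  "(complex \<Rightarrow> 'v::ab_group_add \<Rightarrow> 'v) \<Rightarrow> (nat \<Rightarrow> 'v \<Rightarrow> 'v) \<Rightarrow> (nat \<Rightarrow> 'v \<Rightarrow> 'v)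
     \<Rightarrow> (nat \<Rightarrow> 'v \<Rightarrow> 'v) \<Rightarrow> (nat \<Rightarrow> 'v \<Rightarrow> 'v) \<Rightarrow> bool" where
  "irreducible_rep sc E F K Ki \<longleftrightarrow>
     (\<forall>W. module.subspace sc W \<and>
          (\<forall>i\<in>{1,2}. \<forall>x\<in>W. E i x \<in> W \<and> F i x \<in> W \<and> K i x \<in> W \<and> Ki i x \<in> W)
          \<longrightarrow> W = {0} \<or> W = UNIV)"

definition F3hat ::
  "real \<Rightarrow> (complex \<Rightarrow> 'v::ab_group_add \<Rightarrow> 'v) \<Rightarrow> (nat \<Rightarrow> 'v \<Rightarrow> 'v) \<Rightarrow> (nat \<Rightarrow> 'v \<Rightarrow> 'v)
     \<Rightarrow> (nat \<Rightarrow> 'v \<Rightarrow> 'v) \<Rightarrow> 'v \<Rightarrow> 'v" where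
  "F3hat q sc F K Ki x =
     F 1 (F 2 (sc (1 / complex_of_real (q - inverse q))
                 (sc (complex_of_real q) (K 2 x) - sc (complex_of_real (inverse q)) (Ki 2 x))))
     - F 2 (F 1 (sc (1 / complex_of_real (q - inverse q)) (K 2 x - Ki 2 x)))"

definition vkl ::
  "real \<Rightarrow> (complex \<Rightarrow> 'v::ab_group_add \<Rightarrow> 'v) \<Rightarrow> (nat \<Rightarrow> 'v \<Rightarrow> 'v) \<Rightarrow> (nat \<Rightarrow> 'v \<Rightarrow> 'v)
     \<Rightarrow> (nat \<Rightarrow> 'v \<Rightarrow> 'v) \<Rightarrow> 'v \<Rightarrow> nat \<Rightarrow> nat \<Rightarrow> nat \<Rightarrow> 'v" where
  "vkl q sc F K Ki v k l m = (F 2 ^^ k) ((F3hat q sc F K Ki ^^ l) ((F 1 ^^ m) v))"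

definition qd :: "real \<Rightarrow> int \<Rightarrow> real" where
  "qd q n = q powi n - q powi (- n)"

definition coef_a :: "real \<Rightarrow> nat \<Rightarrow> nat \<Rightarrow> nat \<Rightarrow> nat \<Rightarrow> nat \<Rightarrow> real" where
  "coef_a q l1 l2 k l m =
     qd q (int l2 + int m + 1 - int k - int l) / qd q (int l2 + int m + 1 - int l)"

definition coef_b :: "real \<Rightarrow> nat \<Rightarrow> nat \<Rightarrow> nat \<Rightarrow> nat \<Rightarrow> nat \<Rightarrow> real" where
  "coef_b q l1 l2 k l m = qd q (int k) / qd q (int l2 + int m + 1 - int l)"

definition coef_eta :: "real \<Rightarrow> nat \<Rightarrow> nat \<Rightarrow> nat \<Rightarrow> nat \<Rightarrow> nat \<Rightarrow> real" where
  "coef_eta q l1 l2 k l m =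
     qd q (int k) / (q - inverse q) * (qd q (1 - int k + int l2 - int l + int m) / (q - inverse q))"

definition coef_alpha :: "real \<Rightarrow> nat \<Rightarrow> nat \<Rightarrow> nat \<Rightarrow> nat \<Rightarrow> nat \<Rightarrow> real" where
  "coef_alpha q l1 l2 k l m =
     (qd q (int m) * qd q (int l1 - int m + 1) * qd q (int l2 + int m + 1)) /
     ((q - inverse q)^2 * qd q (int l2 + int m - int l + 1))"

definition coef_beta :: "real \<Rightarrow> nat \<Rightarrow> nat \<Rightarrow> nat \<Rightarrow> nat \<Rightarrow> nat \<Rightarrow> real" where
  "coef_beta q l1 l2 k l m =
     (qd q (int l) * qd q (int l2 - int l + 1) * qd q (int l1 + int l2 - int l + 2)) /
     ((q - inverse q)^2 * qd q (int l2 + int m - int l + 1))"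

end

theory Submission
  imports Defs
begin

declare One_nat_def[simp del]

locale urep =
  fixes q :: real and sc :: "complex \<Rightarrow> 'v::ab_group_add \<Rightarrow> 'v"
    and E F K Ki :: "nat \<Rightarrow> 'v \<Rightarrow> 'v"
  assumes q0: "0 < q" and q1: "q < 1"
    and rep: "Uq_su3_rep q sc E F K Ki"
begin

sublocale V: vector_space sc using rep unfolding Uq_su3_rep_def by auto

definition sm :: "real \<Rightarrow> 'v \<Rightarrow> 'v" where "sm r x = sc (complex_of_real r) x"

lemma sm_add_left: "sm (a + b) x = sm a x + sm b x" unfolding sm_def by (simp add: V.scale_left_distrib)
lemma sm_diff_left: "sm (a - b) x = sm a x - sm b x" unfolding sm_def by (simp add: V.scale_left_diff_distrib)
lemma sm_add_right: "sm a (x + y) = sm a x + sm a y" unfolding sm_def by (simp add: V.scale_right_distrib)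
lemma sm_diff_right: "sm a (x - y) = sm a x - sm a y" unfolding sm_def by (simp add: V.scale_right_diff_distrib)
lemma sm_sm: "sm a (sm b x) = sm (a * b) x" unfolding sm_def by simp
lemma sm_one: "sm 1 x = x" unfolding sm_def by simp
lemma sm_zero_left: "sm 0 x = 0" unfolding sm_def by simp
lemma sm_zero_right: "sm a 0 = 0" unfolding sm_def by simp
lemma sm_minus_left: "sm (- a) x = - sm a x" unfolding sm_def by simp
lemma sm_minus_right: "sm a (- x) = - sm a x" unfolding sm_def by simp

lemmas smd = sm_add_left sm_diff_left sm_add_right sm_diff_right sm_sm sm_one sm_zero_left sm_zero_right
  sm_minus_left sm_minus_right

lemma lin: "i \<in> {1,2} \<Longrightarrow> Vector_Spaces.linear sc sc (E i) \<and> Vector_Spaces.linear sc sc (F i) \<and>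
                 Vector_Spaces.linear sc sc (K i) \<and> Vector_Spaces.linear sc sc (Ki i)"
  using rep unfolding Uq_su3_rep_def by blast

lemma lin_ops:
  assumes "Vector_Spaces.linear sc sc f"
  shows "f (x + y) = f x + f y" "f (x - y) = f x - f y" "f (sm a x) = sm a (f x)" "f 0 = 0" "f (- x) = - f x"
proof -
  have h: "module_hom sc sc f" using assms by (simp add: Vector_Spaces.linear_def)
  show "f (x + y) = f x + f y" "f (x - y) = f x - f y" "f (sm a x) = sm a (f x)" "f 0 = 0" "f (- x) = - f x"
    unfolding sm_def using module_hom.add[OF h] module_hom.diff[OF h] module_hom.scale[OF h]
      module_hom.zero[OF h] module_hom.neg[OF h] by auto
qed

lemmas linE1 = lin_ops[OF lin[of 1, OF insertI1, THEN conjunct1]]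
lemmas linF1 = lin_ops[OF lin[of 1, OF insertI1, THEN conjunct2, THEN conjunct1]]
lemmas linK1 = lin_ops[OF lin[of 1, OF insertI1, THEN conjunct2, THEN conjunct2, THEN conjunct1]]
lemmas linKi1 = lin_ops[OF lin[of 1, OF insertI1, THEN conjunct2, THEN conjunct2, THEN conjunct2]]
lemmas linE2 = lin_ops[OF lin[of 2, simplified, THEN conjunct1]]
lemmas linF2 = lin_ops[OF lin[of 2, simplified, THEN conjunct2, THEN conjunct1]]
lemmas linK2 = lin_ops[OF lin[of 2, simplified, THEN conjunct2, THEN conjunct2, THEN conjunct1]]
lemmas linKi2 = lin_ops[OF lin[of 2, simplified, THEN conjunct2, THEN conjunct2, THEN conjunct2]]
lemmas linall = linE1 linF1 linK1 linKi1 linE2 linF2 linK2 linKi2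

lemma rel: "i \<in> {1,2} \<Longrightarrow> j \<in> {1,2} \<Longrightarrow> 
        K i (K j x) = K j (K i x) \<and> K i (Ki j x) = Ki j (K i x) \<and> Ki i (Ki j x) = Ki j (Ki i x) \<and>
        K i (Ki i x) = x \<and> Ki i (K i x) = x \<and>
        K i (E j x) = sc (complex_of_real q powi cartan i j) (E j (K i x)) \<and>
        K i (F j x) = sc (complex_of_real q powi (- cartan i j)) (F j (K i x)) \<and>
        E i (F j x) - F j (E i x) =
          (if i = j then sc (1 / complex_of_real (q - inverse q)) (K i x - Ki i x) else 0) \<and>
        (i \<noteq> j \<longrightarrow>
           E i (E i (E j x)) - sc (complex_of_real (q + inverse q)) (E i (E j (E i x)))
             + E j (E i (E i x)) = 0 \<and>
           F i (F i (F j x)) - sc (complex_of_real (q + inverse q)) (F i (F j (F i x)))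
             + F j (F i (F i x)) = 0)"
  using rep unfolding Uq_su3_rep_def by blast

lemma KF: "i \<in> {1,2} \<Longrightarrow> j \<in> {1,2} \<Longrightarrow> K i (F j x) = sm (q powi (- cartan i j)) (F j (K i x))"
  using rel[of i j x] unfolding sm_def by (simp del: of_real_power_int add: of_real_power_int[symmetric])
lemma KE: "i \<in> {1,2} \<Longrightarrow> j \<in> {1,2} \<Longrightarrow> K i (E j x) = sm (q powi (cartan i j)) (E j (K i x))"
  using rel[of i j x] unfolding sm_def by (simp del: of_real_power_int add: of_real_power_int[symmetric])
lemma KiK: "i \<in> {1,2} \<Longrightarrow> Ki i (K i x) = x" using rel[of i i x] by blast
lemma EF_same: "i \<in> {1,2} \<Longrightarrow> E i (F i x) = F i (E i x) + sm (1 / (q - inverse q)) (K i x - Ki i x)"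
  using rel[of i i x] unfolding sm_def by (simp add: algebra_simps)
lemma E1F2: "E 1 (F 2 x) = F 2 (E 1 x)" using rel[of 1 2 x] by simp
lemma E2F1: "E 2 (F 1 x) = F 1 (E 2 x)" using rel[of 2 1 x] by simp
lemma serre12: "F 1 (F 1 (F 2 x)) = sm (q + inverse q) (F 1 (F 2 (F 1 x))) - F 2 (F 1 (F 1 x))"
  using rel[of 1 2 x] unfolding sm_def by (simp add: algebra_simps eq_diff_eq)
lemma serre21: "F 2 (F 2 (F 1 x)) = sm (q + inverse q) (F 2 (F 1 (F 2 x))) - F 1 (F 2 (F 2 x))"
  using rel[of 2 1 x] unfolding sm_def by (simp add: algebra_simps eq_diff_eq)

lemma qne: "q \<noteq> 0" using q0 by simp
lemma qden: "q - inverse q \<noteq> 0"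
proof
  assume "q - inverse q = 0"
  then have "q * q = 1" using qne by (simp add: field_simps)
  then show False using q0 q1 by (smt (verit) mult_less_cancel_left1)
qed

lemma pw: "q powi m * q powi n = q powi (m + n)" using qne by (simp add: power_int_add)

definition wt :: "'v \<Rightarrow> int \<Rightarrow> int \<Rightarrow> bool" where
  "wt x a b \<longleftrightarrow> K 1 x = sm (q powi a) x \<and> K 2 x = sm (q powi b) x"

lemma wt_F1: "wt x a b \<Longrightarrow> wt (F 1 x) (a - 2) (b + 1)"
  unfolding wt_def using KF[of 1 1 x] KF[of 2 1 x] by (simp add: linF1 sm_sm cartan_def power_int_add power_int_diff power_int_minus qne field_simps)
lemma wt_F2: "wt x a b \<Longrightarrow> wt (F 2 x) (a + 1) (b - 2)"
  unfolding wt_def using KF[of 1 2 x] KF[of 2 2 x] by (simp add: linF2 sm_sm cartan_def power_int_add power_int_diff power_int_minus qne field_simps)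
lemma wt_E1: "wt x a b \<Longrightarrow> wt (E 1 x) (a + 2) (b - 1)"
  unfolding wt_def using KE[of 1 1 x] KE[of 2 1 x] by (simp add: linE1 sm_sm cartan_def power_int_add power_int_diff power_int_minus qne field_simps)
lemma wt_E2: "wt x a b \<Longrightarrow> wt (E 2 x) (a - 1) (b + 2)"
  unfolding wt_def using KE[of 1 2 x] KE[of 2 2 x] by (simp add: linE2 sm_sm cartan_def power_int_add power_int_diff power_int_minus qne field_simps)
lemma wt_sm: "wt x a b \<Longrightarrow> wt (sm c x) a b"
  unfolding wt_def by (simp add: linK1 linK2 sm_sm mult.commute)


definition Dq :: real where "Dq = q - inverse q"
definition qb :: "int \<Rightarrow> real" where "qb n = qd q n / Dq"
lemma Dq_nz: "Dq \<noteq> 0" using qden unfolding Dq_def .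

lemma sc_sm: "sc (complex_of_real r) x = sm r x" unfolding sm_def ..
lemma sc_sm_div: "sc (1 / complex_of_real r) x = sm (1 / r) x" unfolding sm_def by simp

lemma Ki1_wt: assumes "wt x a b" shows "Ki 1 x = sm (q powi (-a)) x"
proof -
  have "x = Ki 1 (K 1 x)" using KiK[of 1 x] by simp
  also have "\<dots> = sm (q powi a) (Ki 1 x)" using assms unfolding wt_def by (simp add: linKi1)
  finally have h: "x = sm (q powi a) (Ki 1 x)" .
  have "sm (q powi (-a)) x = sm (q powi (-a) * q powi a) (Ki 1 x)"
    using arg_cong[OF h, of "sm (q powi (-a))"] by (simp only: sm_sm)
  then show ?thesis using qne by (simp add: pw sm_one)
qed
lemma Ki2_wt: assumes "wt x a b" shows "Ki 2 x = sm (q powi (-b)) x"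
proof -
  have "x = Ki 2 (K 2 x)" using KiK[of 2 x] by simp
  also have "\<dots> = sm (q powi b) (Ki 2 x)" using assms unfolding wt_def by (simp add: linKi2)
  finally have h: "x = sm (q powi b) (Ki 2 x)" .
  have "sm (q powi (-b)) x = sm (q powi (-b) * q powi b) (Ki 2 x)"
    using arg_cong[OF h, of "sm (q powi (-b))"] by (simp only: sm_sm)
  then show ?thesis using qne by (simp add: pw sm_one)
qed

lemma EF1_wt: assumes "wt x a b" shows "E 1 (F 1 x) = F 1 (E 1 x) + sm (qb a) x"
proof -
  have "E 1 (F 1 x) = F 1 (E 1 x) + sm (1 / (q - inverse q)) (sm (q powi a) x - sm (q powi (-a)) x)"
    using EF_same[of 1 x] assms Ki1_wt[OF assms] unfolding wt_def by simp
  also have "\<dots> = F 1 (E 1 x) + sm (qb a) x"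
    unfolding qb_def qd_def Dq_def by (simp add: smd diff_divide_distrib)
  finally show ?thesis .
qed
lemma EF2_wt: assumes "wt x a b" shows "E 2 (F 2 x) = F 2 (E 2 x) + sm (qb b) x"
proof -
  have "E 2 (F 2 x) = F 2 (E 2 x) + sm (1 / (q - inverse q)) (sm (q powi b) x - sm (q powi (-b)) x)"
    using EF_same[of 2 x] assms Ki2_wt[OF assms] unfolding wt_def by simp
  also have "\<dots> = F 2 (E 2 x) + sm (qb b) x"
    unfolding qb_def qd_def Dq_def by (simp add: smd diff_divide_distrib)
  finally show ?thesis .
qed

abbreviation T :: "'v \<Rightarrow> 'v" where "T \<equiv> F3hat q sc F K Ki"

lemma T_wt: assumes "wt x a b" shows "T x = sm (qb (b + 1)) (F 1 (F 2 x)) - sm (qb b) (F 2 (F 1 x))"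
proof -
  have c1: "(q * q powi b - inverse q * q powi (-b)) / (q - inverse q) = qb (b+1)"
    unfolding qb_def qd_def Dq_def using qne by (simp add: power_int_add power_int_diff power_int_minus power_int_mult field_simps)
  have c2: "(q powi b - q powi (-b)) / (q - inverse q) = qb b"
    unfolding qb_def qd_def Dq_def by simp
  have "T x = F 1 (F 2 (sm (1 / (q - inverse q)) (sm q (sm (q powi b) x) - sm (inverse q) (sm (q powi (-b)) x))))
     - F 2 (F 1 (sm (1 / (q - inverse q)) (sm (q powi b) x - sm (q powi (-b)) x)))"
    unfolding F3hat_def sc_sm_div sc_sm using assms Ki2_wt[OF assms] unfolding wt_def by simp
  also have "\<dots> = sm ((q * q powi b - inverse q * q powi (-b)) / (q - inverse q)) (F 1 (F 2 x))
     - sm ((q powi b - q powi (-b)) / (q - inverse q)) (F 2 (F 1 x))"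
    by (simp add: smd linF1 linF2 diff_divide_distrib mult.commute mult.left_commute)
  finally show ?thesis unfolding c1 c2 .
qed

lemma wt_T: "wt x a b \<Longrightarrow> wt (T x) (a - 1) (b - 1)"
proof -
  assume a: "wt x a b"
  have h1: "wt (F 1 (F 2 x)) (a - 1) (b - 1)" using wt_F1[OF wt_F2[OF a]] by simp
  have h2: "wt (F 2 (F 1 x)) (a - 1) (b - 1)" using wt_F2[OF wt_F1[OF a]] by simp
  show ?thesis using h1 h2 unfolding wt_def T_wt[OF a]
    by (simp add: linK1 linK2 smd algebra_simps)
qed

lemma L1: assumes "wt x a b" shows "F 1 (T x) = T (F 1 x)"
proof -
  have c: "qb (b + 1 + 1) = qb (b + 1) * (q + inverse q) - qb b"
    unfolding qb_def using Dq_nz qne unfolding qd_def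
    by (simp add: power_int_add power_int_diff power_int_minus power_int_mult field_simps; algebra)
  show ?thesis
    unfolding T_wt[OF assms] T_wt[OF wt_F1[OF assms]] c
    by (simp add: linF1 linF2 serre12 smd algebra_simps)
qed


lemma qinv: "q * inverse q = 1" "inverse q * q = 1" using qne by auto

definition Y :: "'v \<Rightarrow> 'v" where "Y x = F 1 (F 2 x) - sm q (F 2 (F 1 x))"

lemma LY: "F 2 (Y x) = sm q (Y (F 2 x))"
  unfolding Y_def by (simp add: linF2 serre21 smd algebra_simps qinv)

lemma lin_F2k: "(F 2 ^^ k) (x + y) = (F 2 ^^ k) x + (F 2 ^^ k) y"
  "(F 2 ^^ k) (x - y) = (F 2 ^^ k) x - (F 2 ^^ k) y"
  "(F 2 ^^ k) (sm c x) = sm c ((F 2 ^^ k) x)"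
  by (induction k) (simp_all add: linF2)

lemma F2k_swap: "(F 2 ^^ k) (F 2 x) = F 2 ((F 2 ^^ k) x)"
  by (simp add: funpow_swap1)

lemma LYk: "Y ((F 2 ^^ k) u) = sm (q powi (- int k)) ((F 2 ^^ k) (Y u))"
proof (induction k)
  case 0 then show ?case by (simp add: sm_one)
next
  case (Suc k)
  have h: "Y (F 2 z) = sm (inverse q) (F 2 (Y z))" for z
    using LY[of z] qne by (simp add: sm_sm sm_one)
  have c: "q powi (- int (Suc k)) = inverse q * q powi (- int k)"
    using qne by (simp add: power_int_add power_int_diff power_int_minus power_int_mult field_simps)
  show ?case unfolding c by (simp add: h Suc linF2 sm_sm)
qed

lemma LF1F2k: "F 1 ((F 2 ^^ Suc k) u) = sm (q ^ Suc k) ((F 2 ^^ Suc k) (F 1 u)) + sm (qb (int (Suc k))) ((F 2 ^^ k) (Y u))"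
proof (induction k)
  case 0
  have "qb 1 = 1" unfolding qb_def qd_def Dq_def using qden by simp
  then show ?case unfolding Y_def by (simp add: sm_one)
next
  case (Suc k)
  have c: "qb (int (Suc (Suc k))) = q powi (- int (Suc k)) + q * qb (int (Suc k))"
    unfolding qb_def qd_def Dq_def using qne qden
    by (simp add: power_int_add power_int_diff power_int_minus power_int_mult field_simps; algebra)
  have "F 1 ((F 2 ^^ Suc (Suc k)) u) = Y ((F 2 ^^ Suc k) u) + sm q (F 2 (F 1 ((F 2 ^^ Suc k) u)))"
    unfolding Y_def by simp
  also have "\<dots> = sm (q ^ Suc (Suc k)) ((F 2 ^^ Suc (Suc k)) (F 1 u)) + sm (qb (int (Suc (Suc k)))) ((F 2 ^^ Suc k) (Y u))"
    unfolding LYk Suc c by (simp add: linF2 smd algebra_simps)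
  finally show ?case .
qed

lemma Y_T: assumes "wt u a b" "qb (b + 1) \<noteq> 0"
  shows "Y u = sm (1 / qb (b + 1)) (T u) - sm ((qb (b + 1) * q - qb b) / qb (b + 1)) (F 2 (F 1 u))"
  unfolding T_wt[OF assms(1)] Y_def using assms(2)
  by (simp add: smd algebra_simps diff_divide_distrib)

lemma P3: assumes "wt u a b" "qb (b + 1) \<noteq> 0"
  shows "F 1 ((F 2 ^^ k) u) = sm (qb (b + 1 - int k) / qb (b + 1)) ((F 2 ^^ k) (F 1 u))
             + sm (qb (int k) / qb (b + 1)) ((F 2 ^^ (k - 1)) (T u))"
proof (cases k)
  case 0
  have "qb 0 = 0" unfolding qb_def qd_def by simp
  then show ?thesis using 0 assms(2) by (simp add: sm_one sm_zero_left)
next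
  case (Suc j)
  have c0: "qb (b + 1 - int (Suc j)) = q ^ Suc j * qb (b + 1) - qb (int (Suc j)) * (qb (b + 1) * q - qb b)"
    unfolding qb_def using Dq_nz apply (simp add: field_simps)
    apply (unfold Dq_def qd_def) apply (insert qne)
    by (simp add: power_int_add power_int_diff power_int_minus power_int_mult field_simps; algebra)
  have c: "qb (b + 1 - int (Suc j)) / qb (b + 1) = q ^ Suc j - qb (int (Suc j)) * ((qb (b + 1) * q - qb b) / qb (b + 1))"
    using assms(2) unfolding c0 by (simp add: field_simps)
  show ?thesis unfolding Suc LF1F2k Y_T[OF assms] c
    by (simp add: lin_F2k F2k_swap smd algebra_simps)
qed


lemma wt_F2k: "wt u a b \<Longrightarrow> wt ((F 2 ^^ k) u) (a + int k) (b - 2 * int k)"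
proof (induction k)
  case 0 then show ?case by simp
next
  case (Suc k) then show ?case using wt_F2[OF Suc.IH[OF Suc.prems]] by (simp add: algebra_simps)
qed

lemma wt_F1k: "wt u a b \<Longrightarrow> wt ((F 1 ^^ k) u) (a - 2 * int k) (b + int k)"
proof (induction k)
  case 0 then show ?case by simp
next
  case (Suc k) then show ?case using wt_F1[OF Suc.IH[OF Suc.prems]] by (simp add: algebra_simps)
qed

lemma wt_Tl: "wt u a b \<Longrightarrow> wt ((T ^^ k) u) (a - int k) (b - int k)"
proof (induction k)
  case 0 then show ?case by simp
next
  case (Suc k) then show ?case using wt_T[OF Suc.IH[OF Suc.prems]] by (simp add: algebra_simps)
qed

lemma E2T: assumes "wt x a b" "E 2 x = 0" shows "E 2 (T x) = 0"
  unfolding T_wt[OF assms(1)]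
  using EF2_wt[OF assms(1)] EF2_wt[OF wt_F1[OF assms(1)]] assms(2)
  by (simp add: linE2 linF1 linF2 E2F1 smd algebra_simps)

lemma qb1: "qb 1 = 1" unfolding qb_def qd_def Dq_def using qden by simp

lemma sl2id: "qb (j + 1 + 1) * qb (a - (j + 1)) = qb (j + 1) * qb (a - j) + qb (a - 2 * (j + 1))"
    unfolding qb_def using Dq_nz apply (simp add: field_simps)
    apply (unfold Dq_def qd_def) apply (insert qne)
    by (simp add: power_int_add power_int_diff power_int_minus power_int_mult field_simps; algebra)

lemma sl2_2: assumes "wt u a b" "E 2 u = 0"
  shows "E 2 ((F 2 ^^ Suc k) u) = sm (qb (int k + 1) * qb (b - int k)) ((F 2 ^^ k) u)"
proof (induction k)
  case 0
  have "qb 1 = 1" unfolding qb_def qd_def Dq_def using qden by simp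
  then show ?case using EF2_wt[OF assms(1)] assms(2) by (simp add: linF2)
next
  case (Suc k)
  have c: "qb (int (Suc k) + 1) * qb (b - int (Suc k)) = qb (int k + 1) * qb (b - int k) + qb (b - 2 * int (Suc k))"
    using sl2id[of "int k" b] by (simp add: algebra_simps)
  have "E 2 ((F 2 ^^ Suc (Suc k)) u) = F 2 (E 2 ((F 2 ^^ Suc k) u)) + sm (qb (b - 2 * int (Suc k))) ((F 2 ^^ Suc k) u)"
    using EF2_wt[OF wt_F2k[OF assms(1), of "Suc k"]] by simp
  also have "\<dots> = sm (qb (int (Suc k) + 1) * qb (b - int (Suc k))) ((F 2 ^^ Suc k) u)"
    unfolding Suc c by (simp add: linF2 smd algebra_simps)
  finally show ?case .
qed

lemma sl2_1: assumes "wt u a b" "E 1 u = 0"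
  shows "E 1 ((F 1 ^^ Suc k) u) = sm (qb (int k + 1) * qb (a - int k)) ((F 1 ^^ k) u)"
proof (induction k)
  case 0
  have "qb 1 = 1" unfolding qb_def qd_def Dq_def using qden by simp
  then show ?case using EF1_wt[OF assms(1)] assms(2) by (simp add: linF1)
next
  case (Suc k)
  have c: "qb (int (Suc k) + 1) * qb (a - int (Suc k)) = qb (int k + 1) * qb (a - int k) + qb (a - 2 * int (Suc k))"
    using sl2id[of "int k" a] by (simp add: algebra_simps)
  have "E 1 ((F 1 ^^ Suc (Suc k)) u) = F 1 (E 1 ((F 1 ^^ Suc k) u)) + sm (qb (a - 2 * int (Suc k))) ((F 1 ^^ Suc k) u)"
    using EF1_wt[OF wt_F1k[OF assms(1), of "Suc k"]] by simp
  also have "\<dots> = sm (qb (int (Suc k) + 1) * qb (a - int (Suc k))) ((F 1 ^^ Suc k) u)"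
    unfolding Suc c by (simp add: linF1 smd algebra_simps)
  finally show ?case .
qed

definition Phi :: "int \<Rightarrow> 'v \<Rightarrow> 'v" where
  "Phi b y = sm (qb (b + 1)) (F 1 (F 2 y)) - sm (qb b) (F 2 (F 1 y))"

lemma Phi_lin: "Phi b (sm c y + sm d z) = sm c (Phi b y) + sm d (Phi b z)"
  unfolding Phi_def by (simp add: linF1 linF2 smd algebra_simps)

lemma E1T: assumes "wt x a b" shows "E 1 (T x) = sm (qb (a + b + 1)) (F 2 x) + Phi b (E 1 x)"
proof -
  have c: "qb (a + b + 1) = qb (b + 1) * qb (a + 1) - qb b * qb a"
    unfolding qb_def using Dq_nz apply (simp add: field_simps)
    apply (unfold Dq_def qd_def) apply (insert qne)
    by (simp add: power_int_add power_int_diff power_int_minus power_int_mult field_simps; algebra)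
  show ?thesis unfolding T_wt[OF assms] Phi_def c
    using EF1_wt[OF assms] EF1_wt[OF wt_F2[OF assms]]
    by (simp add: linE1 linF1 linF2 E1F2 smd algebra_simps)
qed

lemma PhiA: assumes "F 1 y = x" "wt y (a + 2) (b - 1)" "qb b \<noteq> 0"
  shows "Phi b y = sm (qb (b + 1) / qb b) (T y) + sm (- 1 / qb b) (F 2 x)"
proof -
  have t: "T y = sm (qb b) (F 1 (F 2 y)) - sm (qb (b - 1)) (F 2 x)"
    using T_wt[OF assms(2)] assms(1) by simp
  have e: "F 1 (F 2 y) = sm (1 / qb b) (T y) + sm (qb (b - 1) / qb b) (F 2 x)"
    unfolding t using assms(3) by (simp add: smd algebra_simps)
  have c: "- 1 / qb b = qb (b + 1) * (qb (b - 1) / qb b) - qb b"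
  proof -
    have c0: "qb (b + 1) * qb (b - 1) - qb b * qb b = -1"
      unfolding qb_def using Dq_nz apply (simp add: field_simps)
      apply (unfold Dq_def qd_def) apply (insert qne)
      by (simp add: power_int_add power_int_diff power_int_minus power_int_mult field_simps; algebra)
    show ?thesis using assms(3) c0 by (simp add: field_simps)
  qed
  show ?thesis unfolding Phi_def e c assms(1)[symmetric]
    by (simp add: linF1 linF2 smd algebra_simps)
qed

lemma PhiB: assumes "T y = x" "wt y (a + 1) (b + 1)" "qb (b + 2) \<noteq> 0"
  shows "Phi b (F 2 y) = F 2 x"
proof -
  have n: "qb (b + 1 + 1) \<noteq> 0" using assms(3) by (simp add: add.assoc)
  have e1: "F 1 (F 2 y) = sm (qb (b + 1) / qb (b + 2)) (F 2 (F 1 y)) + sm (1 / qb (b + 2)) x"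
    using P3[OF assms(2) n, of 1] assms(1) by (simp add: add.assoc One_nat_def qb1 add.commute)
  have e2: "F 1 (F 2 (F 2 y)) = sm (qb b / qb (b + 2)) (F 2 (F 2 (F 1 y))) + sm (qb 2 / qb (b + 2)) (F 2 x)"
    using P3[OF assms(2) n, of 2] assms(1) by (simp add: add.assoc numeral_2_eq_2)
  have c: "(qb (b + 1) * qb 2 - qb b) / qb (b + 2) = 1"
  proof -
    have c0: "qb (b + 1) * qb 2 - qb b = qb (b + 2)"
      unfolding qb_def using Dq_nz apply (simp add: field_simps)
      apply (unfold Dq_def qd_def) apply (insert qne)
      by (simp add: power_int_add power_int_diff power_int_minus power_int_mult field_simps; algebra)
    show ?thesis using assms(3) c0 by simp
  qed
  have "Phi b (F 2 y) = sm ((qb (b + 1) * qb 2 - qb b) / qb (b + 2)) (F 2 x)"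
    unfolding Phi_def e1 e2 by (simp add: linF2 smd algebra_simps diff_divide_distrib)
  then show ?thesis unfolding c by (simp add: sm_one)
qed


lemma qd_nz: assumes "n \<noteq> 0" shows "qd q n \<noteq> 0"
proof
  assume h: "qd q n = 0"
  then have e: "q powi n = q powi (- n)" unfolding qd_def by simp
  show False
  proof (cases "n > 0")
    case True
    then obtain k where k: "n = int k" "k > 0" by (metis pos_int_cases of_nat_0_less_iff)
    have "q ^ k < 1" using k q0 q1 by (simp add: power_less_one_iff)
    moreover have "1 < inverse q ^ k" using k q0 q1 one_less_inverse[of q] one_less_power[of "inverse q" k] by simp
    ultimately show False using e k by (simp add: power_int_minus power_inverse)
  next
    case False
    then obtain k where k: "n = - int k" "k > 0" using assms
      by (metis neg_int_cases linorder_neqE_linordered_idom of_nat_0_less_iff not_less_iff_gr_or_eq)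
    have "q ^ k < 1" using k q0 q1 by (simp add: power_less_one_iff)
    moreover have "1 < inverse q ^ k" using k q0 q1 one_less_inverse[of q] one_less_power[of "inverse q" k] by simp
    ultimately show False using e k by (simp add: power_int_minus power_inverse)
  qed
qed

lemma qb_nz: "n \<noteq> 0 \<Longrightarrow> qb n \<noteq> 0"
  unfolding qb_def using qd_nz Dq_nz by simp

lemma wt_cong: "wt x a b \<Longrightarrow> a = a' \<Longrightarrow> b = b' \<Longrightarrow> wt x a' b'" by simp

lemma F1_Tl: "wt y a b \<Longrightarrow> F 1 ((T ^^ l) y) = (T ^^ l) (F 1 y)"
proof (induction l)
  case 0 then show ?case by simp
next
  case (Suc l) then show ?case using L1[OF wt_Tl[OF Suc.prems, of l]] by simp
qed

lemma Sbeta: fixes L N l m :: int 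
  assumes "a = L - l - 2*m" "b = N - l + m"
  shows "qd q (a+b+1) * qd q b * qd q (b+1) * qd q 1 - (qd q m * qd q (L - m + 1) * qd q (N + m + 1)) * qd q 1 
       + qd q l * qd q (N - l + 1) * qd q (L + N - l + 2) * qd q b =
      qd q (l+1) * qd q (N - l) * qd q (L + N - l + 1) * qd q (b+1)"
  using qne unfolding qd_def assms
  by (simp add: power_int_add power_int_diff power_int_minus power_int_mult field_simps) algebra

lemma E1_F2k: "E 1 ((F 2 ^^ k) y) = (F 2 ^^ k) (E 1 y)"
  by (induction k) (simp_all add: E1F2)

end

locale hwrep = urep q sc E F K Ki
  for q :: real and sc :: "complex \<Rightarrow> 'v::ab_group_add \<Rightarrow> 'v" and E F K Ki :: "nat \<Rightarrow> 'v \<Rightarrow> 'v" +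
  fixes v :: 'v and l1 l2 :: nat
  assumes hwE1: "E 1 v = 0" and hwE2: "E 2 v = 0"
    and hwK1: "K 1 v = sc (complex_of_real q ^ l1) v" and hwK2: "K 2 v = sc (complex_of_real q ^ l2) v"
begin

definition w :: "nat \<Rightarrow> nat \<Rightarrow> 'v" where "w l m = (T ^^ l) ((F 1 ^^ m) v)"

lemma wt_v: "wt v (int l1) (int l2)"
  unfolding wt_def using hwK1 hwK2 unfolding sm_def by (simp add: power_int_of_nat)

lemma wt_w: "wt (w l m) (int l1 - int l - 2 * int m) (int l2 - int l + int m)"
  unfolding w_def using wt_Tl[OF wt_F1k[OF wt_v, of m], of l] by (simp add: algebra_simps)

lemma F1w: "F 1 (w l m) = w l (Suc m)"
  unfolding w_def using F1_Tl[OF wt_F1k[OF wt_v, of m]] by simp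

lemma Tw: "T (w l m) = w (Suc l) m" unfolding w_def by simp

lemma E2w: "E 2 (w l m) = 0"
proof -
  have h: "E 2 ((F 1 ^^ m) v) = 0" by (induction m) (simp_all add: hwE2 E2F1 linF1)
  have "E 2 ((T ^^ l) ((F 1 ^^ m) v)) = 0"
  proof (induction l)
    case 0 then show ?case using h by simp
  next
    case (Suc l) then show ?case using E2T[OF wt_Tl[OF wt_F1k[OF wt_v, of m], of l]] by simp
  qed
  then show ?thesis unfolding w_def .
qed

definition alpha :: "nat \<Rightarrow> nat \<Rightarrow> real" where "alpha l m = coef_alpha q l1 l2 0 l m"
definition beta :: "nat \<Rightarrow> nat \<Rightarrow> real" where "beta l m = coef_beta q l1 l2 0 l m"


lemma qd0: "qd q 0 = 0" unfolding qd_def by simp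

lemma alpha0: "alpha l 0 = 0" unfolding alpha_def coef_alpha_def by (simp add: qd0)
lemma beta0: "beta 0 m = 0" unfolding beta_def coef_beta_def by (simp add: qd0)

lemma alpha_base: "alpha 0 (Suc j) = qb (int j + 1) * qb (int l1 - int j)"
proof -
  have nz: "qd q (int l2 + int (Suc j) + 1) \<noteq> 0" by (rule qd_nz) simp
  have e1: "int l1 - int (Suc j) + 1 = int l1 - int j" by simp
  have e2: "int l2 + int (Suc j) - int 0 + 1 = int l2 + int (Suc j) + 1" by simp
  have e3: "int (Suc j) = int j + 1" by simp
  show ?thesis unfolding alpha_def coef_alpha_def e1 e2 qb_def Dq_def[symmetric] using nz Dq_nz
    by (simp only: e3) (simp add: field_simps power2_eq_square)
qed

lemma alpha_step: assumes "l < l2"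
  shows "alpha (Suc l) m = alpha l m * (qb (int l2 - int l + int m + 1) / qb (int l2 - int l + int m))"
proof -
  have nz1: "qd q (int l2 - int l + int m) \<noteq> 0" by (rule qd_nz) (use assms in simp)
  have nz2: "qd q (int l2 - int l + int m + 1) \<noteq> 0" by (rule qd_nz) (use assms in simp)
  have e1: "int l2 + int m - int (Suc l) + 1 = int l2 - int l + int m" by simp
  have e2: "int l2 + int m - int l + 1 = int l2 - int l + int m + 1" by simp
  show ?thesis unfolding alpha_def coef_alpha_def e1 e2 qb_def using nz1 nz2 Dq_nz
    by (simp add: field_simps)
qed

lemma beta_step: assumes "l < l2"
  shows "beta (Suc l) m = qb ((int l1 - int l - 2 * int m) + (int l2 - int l + int m) + 1)
            + alpha l m * (- 1 / qb (int l2 - int l + int m)) + beta l m"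
proof -
  define b where "b = int l2 - int l + int m"
  define a where "a = int l1 - int l - 2 * int m"
  have nz1: "qd q b \<noteq> 0" unfolding b_def by (rule qd_nz) (use assms in simp)
  have nz2: "qd q (b + 1) \<noteq> 0" unfolding b_def by (rule qd_nz) (use assms in simp)
  have e1: "int l2 + int m - int (Suc l) + 1 = b" unfolding b_def by simp
  have e2: "int l2 + int m - int l + 1 = b + 1" unfolding b_def by simp
  have e3: "int (Suc l) = int l + 1" by simp
  have e4: "int l2 - (int l + 1) + 1 = int l2 - int l" by simp
  have e5: "int l1 + int l2 - (int l + 1) + 2 = int l1 + int l2 - int l + 1" by simp
  have D: "qd q 1 = Dq" unfolding qd_def Dq_def by (simp add: power_int_minus)
  have S: "qd q (a+b+1) * qd q b * qd q (b+1) * qd q 1 - (qd q (int m) * qd q (int l1 - int m + 1) * qd q (int l2 + int m + 1)) * qd q 1 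
       + qd q (int l) * qd q (int l2 - int l + 1) * qd q (int l1 + int l2 - int l + 2) * qd q b =
      qd q (int l+1) * qd q (int l2 - int l) * qd q (int l1 + int l2 - int l + 1) * qd q (b+1)"
    using Sbeta[where a=a and L="int l1" and l="int l" and m="int m" and b=b and N="int l2"] unfolding a_def b_def by simp
  note S' = S[unfolded D]
  have D1: "qd q 1 \<noteq> 0" by (rule qd_nz) simp
  show ?thesis unfolding alpha_def beta_def coef_alpha_def coef_beta_def qb_def Dq_def e1 e2
    unfolding e3 e4 e5 Dq_def[symmetric] b_def[symmetric] a_def[symmetric]
    using nz1 nz2 Dq_nz S' by (simp add: field_simps power2_eq_square; algebra)
qed


lemma R: "l \<le> l2 \<Longrightarrow> E 1 (w l m) = sm (alpha l m) (w l (m - 1)) + sm (beta l m) (F 2 (w (l - 1) m))"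
proof (induction l)
  case 0
  show ?case
  proof (cases m)
    case 0 then show ?thesis unfolding w_def using hwE1 by (simp add: alpha0 beta0 sm_zero_left)
  next
    case (Suc j)
    show ?thesis unfolding w_def Suc using sl2_1[OF wt_v hwE1, of j]
      by (simp add: alpha_base beta0 sm_zero_left)
  qed
next
  case (Suc l)
  have ll: "l < l2" using Suc.prems by simp
  define a where "a = int l1 - int l - 2 * int m"
  define b where "b = int l2 - int l + int m"
  define x where "x = w l m"
  have wx: "wt x a b" unfolding x_def a_def b_def by (rule wt_w)
  have IH: "E 1 x = sm (alpha l m) (w l (m - 1)) + sm (beta l m) (F 2 (w (l - 1) m))"
    unfolding x_def using Suc.IH ll by simp
  have hA: "sm (alpha l m) (Phi b (w l (m - 1))) =
      sm (alpha l m) (sm (qb (b + 1) / qb b) (T (w l (m - 1))) + sm (- 1 / qb b) (F 2 x))"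
  proof (cases "alpha l m = 0")
    case True then show ?thesis by (simp add: sm_zero_left)
  next
    case False
    then obtain j where j: "m = Suc j" using alpha0 by (cases m) auto
    have f: "F 1 (w l j) = x" unfolding x_def j by (rule F1w)
    have wy: "wt (w l j) (a + 2) (b - 1)"
      by (rule wt_cong[OF wt_w]) (simp_all add: a_def b_def j)
    have nz: "qb b \<noteq> 0" by (rule qb_nz) (use ll in \<open>simp add: b_def\<close>)
    show ?thesis unfolding j using PhiA[OF f wy nz] by simp
  qed
  have hB: "sm (beta l m) (Phi b (F 2 (w (l - 1) m))) = sm (beta l m) (F 2 x)"
  proof (cases "beta l m = 0")
    case True then show ?thesis by (simp add: sm_zero_left)
  next
    case False
    then obtain i where i: "l = Suc i" using beta0 by (cases l) auto
    have f: "T (w i m) = x" unfolding x_def i by (rule Tw)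
    have wy: "wt (w i m) (a + 1) (b + 1)"
      by (rule wt_cong[OF wt_w]) (simp_all add: a_def b_def i)
    have nz: "qb (b + 2) \<noteq> 0" by (rule qb_nz) (use ll in \<open>simp add: b_def\<close>)
    show ?thesis unfolding i using PhiB[OF f wy nz] by simp
  qed
  have "E 1 (w (Suc l) m) = E 1 (T x)" unfolding x_def Tw ..
  also have "\<dots> = sm (qb (a + b + 1)) (F 2 x) + Phi b (E 1 x)" by (rule E1T[OF wx])
  also have "\<dots> = sm (qb (a + b + 1)) (F 2 x) + sm (alpha l m) (Phi b (w l (m - 1)))
      + sm (beta l m) (Phi b (F 2 (w (l - 1) m)))" unfolding IH Phi_lin by (simp add: add.assoc)
  also have "\<dots> = sm (alpha (Suc l) m) (w (Suc l) (m - 1)) + sm (beta (Suc l) m) (F 2 (w (Suc l - 1) m))"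
    unfolding hA hB alpha_step[OF ll] beta_step[OF ll] a_def[symmetric] b_def[symmetric] Tw
    by (simp add: smd algebra_simps x_def)
  finally show ?case .
qed


lemma vkl_eq: "vkl q sc F K Ki v k l m = (F 2 ^^ k) (w l m)"
  unfolding vkl_def w_def ..

lemma main:
  assumes "l \<le> l2"
  shows
    "K 1 (vkl q sc F K Ki v k l m)
       = sc (complex_of_real q powi (int l1 + int k - int l - 2 * int m)) (vkl q sc F K Ki v k l m)
     \<and> K 2 (vkl q sc F K Ki v k l m)
       = sc (complex_of_real q powi (int l2 - 2 * int k - int l + int m)) (vkl q sc F K Ki v k l m)
     \<and> F 1 (vkl q sc F K Ki v k l m)
       = sc (complex_of_real (coef_a q l1 l2 k l m)) (vkl q sc F K Ki v k l (m + 1))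
         + sc (complex_of_real (coef_b q l1 l2 k l m)) (vkl q sc F K Ki v (k - 1) (l + 1) m)
     \<and> E 1 (vkl q sc F K Ki v k l m)
       = sc (complex_of_real (coef_alpha q l1 l2 k l m)) (vkl q sc F K Ki v k l (m - 1))
         + sc (complex_of_real (coef_beta q l1 l2 k l m)) (vkl q sc F K Ki v (k + 1) (l - 1) m)
     \<and> F 2 (vkl q sc F K Ki v k l m) = vkl q sc F K Ki v (k + 1) l m
     \<and> E 2 (vkl q sc F K Ki v k l m)
       = sc (complex_of_real (coef_eta q l1 l2 k l m)) (vkl q sc F K Ki v (k - 1) l m)"
proof (intro conjI)
  define b where "b = int l2 - int l + int m"
  have wv: "wt ((F 2 ^^ k) (w l m)) (int l1 - int l - 2 * int m + int k) (b - 2 * int k)"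
    unfolding b_def by (rule wt_F2k[OF wt_w])
  have ww: "wt (w l m) (int l1 - int l - 2 * int m) b" unfolding b_def by (rule wt_w)
  have e1: "int l1 - int l - 2 * int m + int k = int l1 + int k - int l - 2 * int m" by simp
  have e2: "b - 2 * int k = int l2 - 2 * int k - int l + int m" unfolding b_def by simp
  show "K 1 (vkl q sc F K Ki v k l m)
       = sc (complex_of_real q powi (int l1 + int k - int l - 2 * int m)) (vkl q sc F K Ki v k l m)"
    using wv unfolding wt_def vkl_eq e1 sm_def by simp
  show "K 2 (vkl q sc F K Ki v k l m)
       = sc (complex_of_real q powi (int l2 - 2 * int k - int l + int m)) (vkl q sc F K Ki v k l m)"
    using wv unfolding wt_def vkl_eq e2 sm_def by simp
  show "F 2 (vkl q sc F K Ki v k l m) = vkl q sc F K Ki v (k + 1) l m"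
    unfolding vkl_eq by (simp add: One_nat_def)
  have nzb: "qb (b + 1) \<noteq> 0" by (rule qb_nz) (use assms in \<open>simp add: b_def\<close>)
  have nzd: "qd q (b + 1) \<noteq> 0" by (rule qd_nz) (use assms in \<open>simp add: b_def\<close>)
  have ca: "coef_a q l1 l2 k l m = qb (b + 1 - int k) / qb (b + 1)"
  proof -
    have e: "int l2 + int m + 1 - int k - int l = b + 1 - int k" "int l2 + int m + 1 - int l = b + 1"
      unfolding b_def by simp_all
    show ?thesis unfolding coef_a_def qb_def e using Dq_nz by simp
  qed
  have cb: "coef_b q l1 l2 k l m = qb (int k) / qb (b + 1)"
  proof -
    have e: "int l2 + int m + 1 - int l = b + 1" unfolding b_def by simp
    show ?thesis unfolding coef_b_def qb_def e using Dq_nz by simp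
  qed
  show "F 1 (vkl q sc F K Ki v k l m)
       = sc (complex_of_real (coef_a q l1 l2 k l m)) (vkl q sc F K Ki v k l (m + 1))
         + sc (complex_of_real (coef_b q l1 l2 k l m)) (vkl q sc F K Ki v (k - 1) (l + 1) m)"
    unfolding vkl_eq sc_sm ca cb P3[OF ww nzb] F1w Tw by (simp add: One_nat_def)
  show "E 1 (vkl q sc F K Ki v k l m)
       = sc (complex_of_real (coef_alpha q l1 l2 k l m)) (vkl q sc F K Ki v k l (m - 1))
         + sc (complex_of_real (coef_beta q l1 l2 k l m)) (vkl q sc F K Ki v (k + 1) (l - 1) m)"
  proof -
    have "coef_alpha q l1 l2 k l m = alpha l m" "coef_beta q l1 l2 k l m = beta l m"
      unfolding alpha_def beta_def coef_alpha_def coef_beta_def by simp_all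
    then show ?thesis unfolding vkl_eq sc_sm E1_F2k R[OF assms]
      by (simp add: lin_F2k F2k_swap One_nat_def)
  qed
  show "E 2 (vkl q sc F K Ki v k l m)
       = sc (complex_of_real (coef_eta q l1 l2 k l m)) (vkl q sc F K Ki v (k - 1) l m)"
  proof (cases k)
    case 0
    then show ?thesis unfolding vkl_eq coef_eta_def by (simp add: E2w qd0 sc_sm sm_zero_left)
  next
    case (Suc j)
    have c: "coef_eta q l1 l2 k l m = qb (int j + 1) * qb (b - int j)"
    proof -
      have e: "1 - int k + int l2 - int l + int m = b - int j" "int k = int j + 1"
        unfolding b_def Suc by simp_all
      show ?thesis unfolding coef_eta_def qb_def Dq_def e by (simp add: b_def algebra_simps)
    qed
    show ?thesis unfolding vkl_eq sc_sm c unfolding Suc sl2_2[OF ww E2w] by simp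
  qed
qed

end

theorem proposition2p4:
  fixes q :: real and l1 l2 :: nat
    and sc :: "complex \<Rightarrow> 'v::ab_group_add \<Rightarrow> 'v"
    and E F K Ki :: "nat \<Rightarrow> 'v \<Rightarrow> 'v" and v :: 'v
  assumes q: "0 < q" "q < 1"
    and rep: "Uq_su3_rep q sc E F K Ki"
    and fd: "fin_dim sc"
    and irr: "irreducible_rep sc E F K Ki"
    and hw: "v \<noteq> 0" "E 1 v = 0" "E 2 v = 0"
      "K 1 v = sc (complex_of_real q ^ l1) v" "K 2 v = sc (complex_of_real q ^ l2) v"
    and km: "m \<le> l1" "l \<le> l2" "k \<le> l2 + m - l"
  shows
    "K 1 (vkl q sc F K Ki v k l m)
       = sc (complex_of_real q powi (int l1 + int k - int l - 2 * int m)) (vkl q sc F K Ki v k l m)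
     \<and> K 2 (vkl q sc F K Ki v k l m)
       = sc (complex_of_real q powi (int l2 - 2 * int k - int l + int m)) (vkl q sc F K Ki v k l m)
     \<and> F 1 (vkl q sc F K Ki v k l m)
       = sc (complex_of_real (coef_a q l1 l2 k l m)) (vkl q sc F K Ki v k l (m + 1))
         + sc (complex_of_real (coef_b q l1 l2 k l m)) (vkl q sc F K Ki v (k - 1) (l + 1) m)
     \<and> E 1 (vkl q sc F K Ki v k l m)
       = sc (complex_of_real (coef_alpha q l1 l2 k l m)) (vkl q sc F K Ki v k l (m - 1))
         + sc (complex_of_real (coef_beta q l1 l2 k l m)) (vkl q sc F K Ki v (k + 1) (l - 1) m)
     \<and> F 2 (vkl q sc F K Ki v k l m) = vkl q sc F K Ki v (k + 1) l m
     \<and> E 2 (vkl q sc F K Ki v k l m)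
       = sc (complex_of_real (coef_eta q l1 l2 k l m)) (vkl q sc F K Ki v (k - 1) l m)"
proof -
  interpret H: hwrep q sc E F K Ki v l1 l2
    by (unfold_locales; (use q rep hw in auto)?)
  show ?thesis by (rule H.main[OF km(2)])
qed

end
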